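(* Let $K\in\mathbb{N}$ and let $\tilde{\mathcal{P}}_K$ be the set of all $K$-variate normal distributions $\mathcal{N}_K(\boldsymbol\mu,\boldsymbol\Sigma)$ with $\boldsymbol\mu\in\mathbb{R}^K$ and $\boldsymbol\Sigma$ a $K\times K$ positive definite matrix. Then $-d_{\mathrm{Jeff}}$ is not conditionally positive definite on $\tilde{\mathcal{P}}_K^2$; that is, there exist $n\in\mathbb{N}$, $\boldsymbol y_1,\dots,\boldsymbol y_n\in\tilde{\mathcal{P}}_K$ and $c_1,\dots,c_n\in\mathbb{R}$ with $\sum_{i=1}^n c_i=0$ such that $\sum_{i=1}^n\sum_{j=1}^n c_ic_j\big(-d_{\mathrm{Jeff}}(\boldsymbol y_i,\boldsymbol y_j)\big)<0$.
   Context: For distributions $\boldsymbol y,\boldsymbol y'$ on $\mathbb{R}^K$ with densities $y,y'$, the Kullback–Leibler divergence is $d_{\mathrm{KL}}(\boldsymbol y,\boldsymbol y')=\int y(\boldsymbol z)\log\frac{y(\boldsymbol z)}{y'(\boldsymbol z)}\,\mathrm{d}\boldsymbol z$, and Jeffrey's divergence is $d_{\mathrm{Jeff}}(\boldsymbol y,\boldsymbol y')=d_{\mathrm{KL}}(\boldsymbol y,\boldsymbol y')+d_{\mathrm{KL}}(\boldsymbol y',\boldsymbol y)$. A symmetric function $g$ on $\mathcal{Y}^2$ is conditionally positive definite if $\sum_{i,j}c_ic_jg(\boldsymbol y_i,\boldsymbol y_j)\ge0$ for all finite families $\boldsymbol y_i\in\mathcal{Y}$ and real $c_i$ with $\sum_i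 c_i=0$. *)

theory Defs
  imports "HOL-Analysis.Analysis"
begin

text \<open>A K-variate normal distribution N_K(mu, Sigma) is represented by its parameters
  (mu, Sigma), where the dimension K = CARD('n) is given by a finite index type.\<close>

definition pos_def_matrix :: "real^'n^'n \<Rightarrow> bool" where
  "pos_def_matrix S \<longleftrightarrow> transpose S = S \<and> (\<forall>x. x \<noteq> 0 \<longrightarrow> x \<bullet> (S *v x) > 0)"

definition normal_params :: "((real^'n) \<times> (real^'n^'n)) set" where
  "normal_params = {(mu, S). pos_def_matrix S}"

definition normal_density_mv :: "(real^'n) \<times> (real^'n^'n) \<Rightarrow> real^'n \<Rightarrow> real" where
  "normal_density_mv p z =
     (let mu = fst p; S = snd p in
      exp (- ((z - mu) \<bullet> (matrix_inv S *v (z - mu))) / 2)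
        / sqrt ((2 * pi) ^ CARD('n) * det S))"

definition d_KL :: "(real^'n \<Rightarrow> real) \<Rightarrow> (real^'n \<Rightarrow> real) \<Rightarrow> real" where
  "d_KL y y' = (\<integral>z. y z * ln (y z / y' z) \<partial>lborel)"

definition d_Jeff :: "(real^'n \<Rightarrow> real) \<Rightarrow> (real^'n \<Rightarrow> real) \<Rightarrow> real" where
  "d_Jeff y y' = d_KL y y' + d_KL y' y"

definition cond_pos_def :: "'a set \<Rightarrow> ('a \<Rightarrow> 'a \<Rightarrow> real) \<Rightarrow> bool" where
  "cond_pos_def Y g \<longleftrightarrow>
     (\<forall>n::nat. \<forall>y c. (\<forall>i<n. y i \<in> Y) \<and> (\<Sum>i<n. c i) = (0::real) \<longrightarrow>
        (\<Sum>i<n. \<Sum>j<n. c i * c j * g (y i) (y j)) \<ge> 0)"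

end

theory Submission
  imports Defs "HOL-Probability.Probability"
begin


lemma mat_mul_mat: "(mat a :: real^'n^'n) ** mat b = mat (a*b)"
  by (auto simp add: vec_eq_iff matrix_matrix_mult_def mat_def mult_delta_left mult_delta_right)

lemma mat_mulv: "(mat a :: real^'n^'n) *v x = a *\<^sub>R x"
  by (auto simp add: vec_eq_iff matrix_vector_mult_def mat_def mult_delta_left mult_delta_right)

lemma matrix_inv_mat: assumes "a \<noteq> 0" shows "matrix_inv (mat a :: real^'n^'n) = mat (1/a)"
  unfolding matrix_inv_def
proof (rule some_equality)
  show "mat a ** mat (1/a) = (mat 1 :: real^'n^'n) \<and> mat (1/a) ** mat a = (mat 1 :: real^'n^'n)"
    using assms by (simp add: mat_mul_mat)
next
  fix A' :: "real^'n^'n" assume h: "mat a ** A' = mat 1 \<and> A' ** mat a = mat 1"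
  have "A' = (mat (1/a) ** mat a) ** A'" using assms by (simp add: mat_mul_mat)
  also have "\<dots> = mat (1/a) ** (mat a ** A')" by (simp add: matrix_mul_assoc)
  also have "\<dots> = mat (1/a)" using h by simp
  finally show "A' = mat (1/a)" .
qed

lemma det_mat: "det (mat a :: real^'n^'n) = a ^ CARD('n)"
  by (subst det_diagonal) (auto simp: mat_def)

lemma card_Basis_vec: "card (Basis :: (real^'n) set) = CARD('n)"
  using DIM_cart[where 'a=real and 'b='n] by simp

lemma dens_C: assumes a: "a > 0"
  shows "normal_density_mv (0::real^'n, mat a) z = exp (- (z \<bullet> z) / (2*a)) / sqrt ((2*pi)^CARD('n) * a^CARD('n))"
  using a by (simp add: normal_density_mv_def matrix_inv_mat mat_mulv det_mat)

lemma dens_prod: assumes a: "a > 0"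
  shows "normal_density_mv (0::real^'n, mat a) z = (\<Prod>b\<in>Basis. normal_density 0 (sqrt a) (z \<bullet> b))"
proof -
  have "(\<Prod>b\<in>Basis. normal_density 0 (sqrt a) (z \<bullet> b))
      = (\<Prod>b\<in>(Basis::(real^'n) set). 1 / sqrt (2*pi*a)) * (\<Prod>b\<in>Basis. exp (- (((z \<bullet> b))\<^sup>2) / (2*a)))"
    unfolding normal_density_def prod.distrib using a by (simp add: power2_eq_square)
  also have "\<dots> = (1 / sqrt (2*pi*a))^CARD('n) * exp (\<Sum>b\<in>Basis. - (((z \<bullet> b))\<^sup>2) / (2*a))"
    by (simp add: exp_sum card_Basis_vec)
  also have "(\<Sum>b\<in>(Basis::(real^'n) set). - (((z \<bullet> b))\<^sup>2) / (2*a)) = - (z \<bullet> z) / (2*a)"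
    by (subst (2) euclidean_inner) (simp add: sum_negf sum_divide_distrib power2_eq_square)
  also have "(1 / sqrt (2*pi*a))^CARD('n) = 1 / sqrt ((2*pi)^CARD('n) * a^CARD('n))"
    by (simp add: real_sqrt_power[symmetric] power_mult_distrib power_divide)
  finally show ?thesis using a by (simp add: dens_C)
qed

lemma prod_int:
  fixes g :: "real^'n \<Rightarrow> real \<Rightarrow> real"
  assumes nn: "\<And>b. b \<in> Basis \<Longrightarrow> (\<integral>\<^sup>+x. ennreal (g b x) \<partial>lborel) = ennreal (v b)"
    and g0: "\<And>b x. 0 \<le> g b x" and v0: "\<And>b. 0 \<le> v b"
    and gm[measurable]: "\<And>b. g b \<in> borel_measurable borel"
  shows "has_bochner_integral lborel (\<lambda>z::real^'n. \<Prod>b\<in>Basis. g b (z \<bullet> b)) (\<Prod>b\<in>Basis. v b)"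
proof (rule has_bochner_integral_nn_integral)
  show "(\<lambda>z::real^'n. \<Prod>b\<in>Basis. g b (z \<bullet> b)) \<in> borel_measurable lborel" by measurable
  show "AE x in lborel. 0 \<le> (\<Prod>b\<in>Basis. g b (x \<bullet> b))" by (simp add: g0 prod_nonneg)
  show "0 \<le> (\<Prod>b\<in>Basis. v b)" by (simp add: v0 prod_nonneg)
  have "(\<integral>\<^sup>+z. ennreal (\<Prod>b\<in>Basis. g b (z \<bullet> b)) \<partial>lborel)
      = (\<integral>\<^sup>+z. (\<Prod>b\<in>(Basis::(real^'n) set). ennreal (g b (z \<bullet> b))) \<partial>lborel)"
    by (simp add: prod_ennreal g0)
  also have "\<dots> = (\<Prod>b\<in>(Basis::(real^'n) set). (\<integral>\<^sup>+x. ennreal (g b x) \<partial>lborel))"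
    by (rule nn_integral_lborel_prod) auto
  also have "\<dots> = (\<Prod>b\<in>(Basis::(real^'n) set). ennreal (v b))"
    by (rule prod.cong) (auto simp: nn)
  also have "\<dots> = ennreal (\<Prod>b\<in>Basis. v b)" by (simp add: prod_ennreal v0)
  finally show "(\<integral>\<^sup>+z. ennreal (\<Prod>b\<in>Basis. g b (z \<bullet> b)) \<partial>lborel) = ennreal (\<Prod>b\<in>Basis. v b)" .
qed

lemma nn1: assumes s: "s > 0" shows "(\<integral>\<^sup>+x. ennreal (normal_density 0 s x) \<partial>lborel) = 1"
proof -
  have "AE x in lborel. 0 \<le> normal_density 0 s x" by simp
  from nn_integral_eq_integral[OF integrable_normal_density this] show ?thesis using s by simp
qed

lemma nn2: fixes a :: real assumes a: "a > 0"
  shows "(\<integral>\<^sup>+x. ennreal (normal_density 0 (sqrt a) x * x\<^sup>2) \<partial>lborel) = ennreal a"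
proof -
  have h: "has_bochner_integral lborel (\<lambda>x. normal_density 0 (sqrt a) x * x\<^sup>2) a"
  proof -
    have "has_bochner_integral lborel (\<lambda>x. normal_density 0 (sqrt a) x * (x - 0) ^ (2 * 1))
        (fact (2 * 1) / ((2 / (sqrt a)\<^sup>2)^1 * fact 1))"
      by (rule normal_moment_even) (simp add: a)
    moreover have "fact (2 * 1) / ((2 / (sqrt a)\<^sup>2)^1 * fact 1) = a" using a by simp
    ultimately show ?thesis using a by (simp add: power2_eq_square)
  qed
  show ?thesis
  proof -
    from h have i: "integrable lborel (\<lambda>x. normal_density 0 (sqrt a) x * x\<^sup>2)"
      and e: "integral\<^sup>L lborel (\<lambda>x. normal_density 0 (sqrt a) x * x\<^sup>2) = a"
      by (auto simp: has_bochner_integral_iff)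
    have "AE x in lborel. 0 \<le> normal_density 0 (sqrt a) x * x\<^sup>2" by simp
    from nn_integral_eq_integral[OF i this] e show ?thesis by simp
  qed
qed

lemma int1: fixes a :: real assumes a: "a > 0"
  shows "has_bochner_integral lborel (normal_density_mv (0::real^'n, mat a)) 1"
proof -
  have "has_bochner_integral lborel (\<lambda>z::real^'n. \<Prod>b\<in>Basis. normal_density 0 (sqrt a) (z \<bullet> b)) (\<Prod>b\<in>(Basis::(real^'n) set). 1)"
    by (rule prod_int[where g="\<lambda>_. normal_density 0 (sqrt a)"]) (auto simp: nn1 a)
  moreover have "normal_density_mv (0::real^'n, mat a) = (\<lambda>z::real^'n. \<Prod>b\<in>Basis. normal_density 0 (sqrt a) (z \<bullet> b))"
    by (rule ext) (rule dens_prod[OF a])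
  ultimately show ?thesis by simp
qed

lemma int2: fixes a :: real assumes a: "a > 0"
  shows "has_bochner_integral lborel (\<lambda>z. normal_density_mv (0::real^'n, mat a) z * (z \<bullet> z)) (CARD('n) * a)"
proof -
  have t: "has_bochner_integral lborel
     (\<lambda>z::real^'n. \<Prod>b\<in>Basis. normal_density 0 (sqrt a) (z \<bullet> b) * (if b = b' then (z \<bullet> b)\<^sup>2 else 1))
     (\<Prod>b\<in>(Basis::(real^'n) set). if b = b' then a else 1)" for b' :: "real^'n"
    by (rule prod_int[where g="\<lambda>b x. normal_density 0 (sqrt a) x * (if b = b' then x\<^sup>2 else 1)"])
       (auto simp: nn1 nn2 a less_imp_le)
  have "has_bochner_integral lborel
     (\<lambda>z::real^'n. \<Sum>b'\<in>Basis. \<Prod>b\<in>Basis. normal_density 0 (sqrt a) (z \<bullet> b) * (if b = b' then (z \<bullet> b)\<^sup>2 else 1))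
     (\<Sum>b'\<in>(Basis::(real^'n) set). \<Prod>b\<in>(Basis::(real^'n) set). if b = b' then a else 1)"
    by (rule has_bochner_integral_sum) (rule t)
  moreover have "(\<Sum>b'\<in>(Basis::(real^'n) set). \<Prod>b\<in>(Basis::(real^'n) set). if b = b' then a else 1) = CARD('n) * a"
    by (simp add: card_Basis_vec)
  moreover have "(\<Sum>b'\<in>Basis. \<Prod>b\<in>Basis. normal_density 0 (sqrt a) (z \<bullet> b) * (if b = b' then (z \<bullet> b)\<^sup>2 else 1))
      = normal_density_mv (0::real^'n, mat a) z * (z \<bullet> z)" for z :: "real^'n"
  proof -
    have "(\<Sum>b'\<in>Basis. \<Prod>b\<in>Basis. normal_density 0 (sqrt a) (z \<bullet> b) * (if b = b' then (z \<bullet> b)\<^sup>2 else 1))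
       = (\<Sum>b'\<in>Basis. (\<Prod>b\<in>Basis. normal_density 0 (sqrt a) (z \<bullet> b)) * (z \<bullet> b')\<^sup>2)"
      by (rule sum.cong) (auto simp: prod.distrib)
    also have "\<dots> = (\<Prod>b\<in>Basis. normal_density 0 (sqrt a) (z \<bullet> b)) * (z \<bullet> z)"
      by (subst (2) euclidean_inner) (simp add: sum_distrib_left power2_eq_square)
    finally show ?thesis by (simp add: dens_prod[OF a])
  qed
  ultimately show ?thesis by simp
qed

definition Cn :: "nat \<Rightarrow> real \<Rightarrow> real" where
  "Cn k a = 1 / sqrt ((2*pi)^k * a^k)"

lemma Cn_pos: "a > 0 \<Longrightarrow> Cn k a > 0"
  by (simp add: Cn_def)

lemma dens_C2: fixes a :: real assumes a: "a > 0"
  shows "normal_density_mv (0::real^'n, mat a) z = Cn CARD('n) a * exp (- (z \<bullet> z) / (2*a))"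
  using a by (simp add: dens_C Cn_def)

lemma KL_point: fixes a b :: real assumes a: "a > 0" and b: "b > 0"
  shows "normal_density_mv (0::real^'n, mat a) z * ln (normal_density_mv (0::real^'n, mat a) z / normal_density_mv (0::real^'n, mat b) z)
     = (ln (Cn CARD('n) a) - ln (Cn CARD('n) b)) * normal_density_mv (0::real^'n, mat a) z
       + (1/(2*b) - 1/(2*a)) * (normal_density_mv (0::real^'n, mat a) z * (z \<bullet> z))"
proof -
  have ca: "Cn CARD('n) a > 0" and cb: "Cn CARD('n) b > 0" using a b by (simp_all add: Cn_pos)
  have h: "ln (normal_density_mv (0::real^'n, mat a) z / normal_density_mv (0::real^'n, mat b) z)
      = ln (Cn CARD('n) a) - (z \<bullet> z) / (2*a) - (ln (Cn CARD('n) b) - (z \<bullet> z) / (2*b))"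
    using ca cb by (simp add: dens_C2 a b ln_div ln_mult)
  show ?thesis unfolding h using a b by (simp add: field_simps)
qed

lemma KL_val: fixes a b :: real assumes a: "a > 0" and b: "b > 0"
  shows "d_KL (normal_density_mv (0::real^'n, mat a)) (normal_density_mv (0::real^'n, mat b))
     = (ln (Cn CARD('n) a) - ln (Cn CARD('n) b)) + (1/(2*b) - 1/(2*a)) * (CARD('n) * a)"
proof -
  have "has_bochner_integral lborel (\<lambda>z. (ln (Cn CARD('n) a) - ln (Cn CARD('n) b)) * normal_density_mv (0::real^'n, mat a) z
       + (1/(2*b) - 1/(2*a)) * (normal_density_mv (0::real^'n, mat a) z * (z \<bullet> z)))
      ((ln (Cn CARD('n) a) - ln (Cn CARD('n) b)) * 1 + (1/(2*b) - 1/(2*a)) * (CARD('n) * a))"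
    by (intro has_bochner_integral_add has_bochner_integral_mult_right int1 int2 a)
  then show ?thesis unfolding d_KL_def KL_point[OF a b]
    by (simp add: has_bochner_integral_iff)
qed

lemma Jeff_val: fixes a b :: real assumes a: "a > 0" and b: "b > 0"
  shows "d_Jeff (normal_density_mv (0::real^'n, mat a)) (normal_density_mv (0::real^'n, mat b))
     = CARD('n) * (a/b + b/a - 2) / 2"
  using a b by (simp add: d_Jeff_def KL_val field_simps)


lemma mat_pos_def: fixes a :: real assumes a: "a > 0" shows "pos_def_matrix (mat a :: real^'n^'n)"
  unfolding pos_def_matrix_def using a by (simp add: mat_mulv)

theorem propositionA1:
  shows "\<not> cond_pos_def (normal_params :: ((real^'n::finite) \<times> (real^'n^'n)) set)
           (\<lambda>p q. - d_Jeff (normal_density_mv p) (normal_density_mv q))"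
proof
  assume H: "cond_pos_def (normal_params :: ((real^'n::finite) \<times> (real^'n^'n)) set)
           (\<lambda>p q. - d_Jeff (normal_density_mv p) (normal_density_mv q))"
  define y where "y i = ((0::real^'n), (mat ((2::real)^i) :: real^'n^'n))" for i :: nat
  define c where "c i = [1, -2, 1::real] ! i" for i :: nat
  have mem: "\<forall>i<3. y i \<in> normal_params"
    by (simp add: y_def normal_params_def mat_pos_def)
  have sc: "(\<Sum>i<3. c i) = 0" by (simp add: c_def numeral_3_eq_3)
  have "0 \<le> (\<Sum>i<3. \<Sum>j<3. c i * c j * (- d_Jeff (normal_density_mv (y i)) (normal_density_mv (y j))))"
    using H mem sc unfolding cond_pos_def_def by blast
  also have "\<dots> = - real CARD('n) / 4"
    by (simp add: y_def c_def numeral_3_eq_3 Jeff_val field_simps)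
  finally show False by simp
qed

end
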